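(* Let $p,q$ be positive integers, with all notation as in the context (in particular $e_s$, $T_e$, $N_{T_c,e}$). Then for every positive integer $e$ and every positive integer $T_c>T_{e_s}$, $$2N_{T_c,e}=N_{2T_c,e+1}.$$
   Context: Let $\mathbf{C}=\begin{bmatrix}1 & p\\ q & 1+pq\end{bmatrix}$. The Cat map over $\mathbb{Z}_{2^e}$ is the bijection $v\mapsto \mathbf{C}v\bmod 2^e$ of $\mathbb{Z}_{2^e}^2$; a cycle of length $n$ is an orbit of a point $v$ for which $n$ is the least positive integer with $\mathbf{C}^n v\equiv v\pmod{2^e}$. $N_{T_c,e}$ denotes the number of cycles of length $T_c$ of the Cat map over $\mathbb{Z}_{2^e}$, and $T_e$ denotes its least period (least $n\ge1$ with $\mathbf{C}^n\equiv I\pmod{2^e}$). Put $A=pq+2$, $B=\sqrt{A^2-4}$, $G_n=\left(\frac{A+B}{2}\right)^n+\left(\frac{A-B}{2}\right)^n$, $H_n=\frac{1}{B}\left(\left(\frac{A+B}{2}\right)^n-\left(\frac{A-B}{2}\right)^n\right)$ (integers). For a nonzero integer $m$ let $v_2(m)$ be the largest $x$ with $2^x\mid m$. Let $e_p=v_2(p)$, $e_q=v_2(q)$; $T_1=3$ if $p,q$ are both odd, $T_1=2$ if exactly one of $p,q$ is odd, $T_1=1$ if both are even; $\hat h=-1$ if $e_p+e_q=0$ and $\hat h=\min(e_p,e_q)$ otherwise; $e_{s,h}=v_2(H_{T_1})$; $m_0=1$ if $\frac12 G_{T_1}\not\equiv 1\pmod 4$ and $m_0=0$ otherwise; $e_{s,g}=v_2\left(\frac12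 G_{2^{m_0}T_1}-1\right)$; $x_0=e_{s,h}+m_0+\hat h-e_{s,g}$ if $e_{s,g}<e_{s,h}+m_0+\hat h$ and $x_0=0$ otherwise; and $e_s=e_{s,h}+m_0+\hat h+x_0$. *)

theory Defs
  imports Complex_Main
begin

(* 2x2 integer matrices as tuples (a,b,c,d) = [[a,b],[c,d]] *)
type_synonym mat2 = "int \<times> int \<times> int \<times> int"

definition mat2_mult :: "mat2 \<Rightarrow> mat2 \<Rightarrow> mat2" where
  "mat2_mult X Y = (case X of (a,b,c,d) \<Rightarrow> case Y of (a',b',c',d') \<Rightarrow>
     (a*a' + b*c', a*b' + b*d', c*a' + d*c', c*b' + d*d'))"

definition cat_mat :: "int \<Rightarrow> int \<Rightarrow> mat2" where
  "cat_mat p q = (1, p, q, 1 + p*q)"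

primrec cat_matpow :: "int \<Rightarrow> int \<Rightarrow> nat \<Rightarrow> mat2" where
  "cat_matpow p q 0 = (1,0,0,1)"
| "cat_matpow p q (Suc n) = mat2_mult (cat_mat p q) (cat_matpow p q n)"

definition mat2_cong :: "mat2 \<Rightarrow> mat2 \<Rightarrow> int \<Rightarrow> bool" where
  "mat2_cong X Y m = (case X of (a,b,c,d) \<Rightarrow> case Y of (a',b',c',d') \<Rightarrow>
     a mod m = a' mod m \<and> b mod m = b' mod m \<and> c mod m = c' mod m \<and> d mod m = d' mod m)"

definition cat_period :: "int \<Rightarrow> int \<Rightarrow> nat \<Rightarrow> nat" where
  "cat_period p q e = (LEAST n. n \<ge> 1 \<and> mat2_cong (cat_matpow p q n) (1,0,0,1) (2^e))"

definition cat_map :: "int \<Rightarrow> int \<Rightarrow> nat \<Rightarrow> int \<times> int \<Rightarrow> int \<times> int" where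
  "cat_map p q e v = (case v of (x,y) \<Rightarrow>
     ((x + p*y) mod 2^e, (q*x + (1+p*q)*y) mod 2^e))"

definition cat_space :: "nat \<Rightarrow> (int \<times> int) set" where
  "cat_space e = {0..<2^e} \<times> {0..<2^e}"

definition point_period :: "int \<Rightarrow> int \<Rightarrow> nat \<Rightarrow> int \<times> int \<Rightarrow> nat" where
  "point_period p q e v = (LEAST n. n \<ge> 1 \<and> (cat_map p q e ^^ n) v = v)"

definition cat_orbit :: "int \<Rightarrow> int \<Rightarrow> nat \<Rightarrow> int \<times> int \<Rightarrow> (int \<times> int) set" where
  "cat_orbit p q e v = {(cat_map p q e ^^ k) v | k. True}"

definition num_cycles :: "int \<Rightarrow> int \<Rightarrow> nat \<Rightarrow> nat \<Rightarrow> nat" where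
  "num_cycles p q Tc e = card {cat_orbit p q e v | v. v \<in> cat_space e \<and> point_period p q e v = Tc}"

(* 2-adic valuation of a nonzero integer *)
definition v2 :: "int \<Rightarrow> nat" where
  "v2 m = (GREATEST x. (2::int)^x dvd m)"

definition catA :: "int \<Rightarrow> int \<Rightarrow> int" where
  "catA p q = p*q + 2"

definition catB :: "int \<Rightarrow> int \<Rightarrow> real" where
  "catB p q = sqrt (of_int (catA p q)^2 - 4)"

(* G_n and H_n (integers), obtained from their real closed forms *)
definition catG :: "int \<Rightarrow> int \<Rightarrow> nat \<Rightarrow> int" where
  "catG p q n = \<lfloor>((of_int (catA p q) + catB p q)/2)^n + ((of_int (catA p q) - catB p q)/2)^n\<rfloor>"

definition catH :: "int \<Rightarrow> int \<Rightarrow> nat \<Rightarrow> int" where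
  "catH p q n = \<lfloor>(1 / catB p q) * (((of_int (catA p q) + catB p q)/2)^n - ((of_int (catA p q) - catB p q)/2)^n)\<rfloor>"

definition T1 :: "int \<Rightarrow> int \<Rightarrow> nat" where
  "T1 p q = (if odd p \<and> odd q then 3 else if odd p \<or> odd q then 2 else 1)"

definition hhat :: "int \<Rightarrow> int \<Rightarrow> int" where
  "hhat p q = (if v2 p + v2 q = 0 then -1 else int (min (v2 p) (v2 q)))"

definition e_sh :: "int \<Rightarrow> int \<Rightarrow> nat" where
  "e_sh p q = v2 (catH p q (T1 p q))"

(* G_{T_1} is even, so G/2 is the integer G div 2 *)
definition m0 :: "int \<Rightarrow> int \<Rightarrow> nat" where
  "m0 p q = (if (catG p q (T1 p q) div 2) mod 4 \<noteq> 1 then 1 else 0)"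

definition e_sg :: "int \<Rightarrow> int \<Rightarrow> nat" where
  "e_sg p q = v2 (catG p q (2^(m0 p q) * T1 p q) div 2 - 1)"

definition x0 :: "int \<Rightarrow> int \<Rightarrow> int" where
  "x0 p q = (if int (e_sg p q) < int (e_sh p q) + int (m0 p q) + hhat p q
             then int (e_sh p q) + int (m0 p q) + hhat p q - int (e_sg p q) else 0)"

definition e_s :: "int \<Rightarrow> int \<Rightarrow> int" where
  "e_s p q = int (e_sh p q) + int (m0 p q) + hhat p q + x0 p q"

end

theory Submission
  imports Defs "HOL-Computational_Algebra.Primes"
begin


definition mv :: "mat2 \<Rightarrow> int \<times> int \<Rightarrow> int \<times> int" where
  "mv X u = (case X of (a,b,c,d) \<Rightarrow> (a * fst u + b * snd u, c * fst u + d * snd u))"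

definition vc :: "int \<Rightarrow> int \<times> int \<Rightarrow> int \<times> int \<Rightarrow> bool" where
  "vc m u w \<longleftrightarrow> m dvd (fst u - fst w) \<and> m dvd (snd u - snd w)"

definition fx :: "int \<Rightarrow> int \<Rightarrow> int \<Rightarrow> nat \<Rightarrow> int \<times> int \<Rightarrow> bool" where
  "fx p q m n u \<longleftrightarrow> vc m (mv (cat_matpow p q n) u) u"

definition mI :: "int \<Rightarrow> int \<Rightarrow> int \<Rightarrow> nat \<Rightarrow> bool" where
  "mI p q m n \<longleftrightarrow> fx p q m n (1,0) \<and> fx p q m n (0,1)"

definition per :: "int \<Rightarrow> int \<Rightarrow> nat \<Rightarrow> int \<times> int \<Rightarrow> nat" where
  "per p q f u = (LEAST n. n \<ge> 1 \<and> fx p q (2^f) n u)"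

definition tr2 :: "mat2 \<Rightarrow> int" where "tr2 X = (case X of (a,b,c,d) \<Rightarrow> a + d)"
definition det2 :: "mat2 \<Rightarrow> int" where "det2 X = (case X of (a,b,c,d) \<Rightarrow> a*d - b*c)"

lemma mv_mult: "mv (mat2_mult X Y) u = mv X (mv Y u)"
  by (cases X; cases Y; cases u) (simp add: mv_def mat2_mult_def algebra_simps)

lemma mult_assoc2: "mat2_mult (mat2_mult X Y) Z = mat2_mult X (mat2_mult Y Z)"
  by (cases X; cases Y; cases Z) (simp add: mat2_mult_def algebra_simps)

lemma mult_id_left: "mat2_mult (1,0,0,1) X = X"
  by (cases X) (simp add: mat2_mult_def)

lemma matpow_add: "cat_matpow p q (a+b) = mat2_mult (cat_matpow p q a) (cat_matpow p q b)"
  by (induction a) (simp_all add: mult_id_left mult_assoc2)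

lemma det_mult: "det2 (mat2_mult X Y) = det2 X * det2 Y"
  by (cases X; cases Y) (simp add: det2_def mat2_mult_def algebra_simps)

lemma det_pow: "det2 (cat_matpow p q n) = 1"
proof (induction n)
  case 0 then show ?case by (simp add: det2_def)
next
  case (Suc n)
  have "det2 (cat_mat p q) = 1" by (simp add: det2_def cat_mat_def algebra_simps)
  then show ?case using Suc by (simp add: det_mult)
qed

lemma tr_sq: "tr2 (mat2_mult X X) = (tr2 X)^2 - 2 * det2 X"
  by (cases X) (simp add: tr2_def det2_def mat2_mult_def power2_eq_square algebra_simps)

lemma tr_double: "tr2 (cat_matpow p q (2*n)) = (tr2 (cat_matpow p q n))^2 - 2"
proof -
  have "cat_matpow p q (2*n) = mat2_mult (cat_matpow p q n) (cat_matpow p q n)"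
    using matpow_add[of p q n n] by (simp add: mult_2)
  thus ?thesis by (simp add: tr_sq det_pow)
qed

lemma mv_pow_add: "mv (cat_matpow p q (a+b)) u = mv (cat_matpow p q a) (mv (cat_matpow p q b) u)"
  by (simp add: matpow_add mv_mult)

lemma vc_refl[simp]: "vc m u u" by (simp add: vc_def)
lemma vc_sym: "vc m u w \<Longrightarrow> vc m w u"
  by (auto simp: vc_def dvd_diff_commute)
lemma vc_trans: "vc m u w \<Longrightarrow> vc m w z \<Longrightarrow> vc m u z"
  unfolding vc_def
  by (metis diff_add_cancel add_diff_eq dvd_add)

lemma vc_lin: "vc m u w \<Longrightarrow> vc m (mv X u) (mv X w)"
proof -
  assume h: "vc m u w"
  obtain a b c d where X: "X = (a,b,c,d)" by (cases X) auto
  have e1: "fst (mv X u) - fst (mv X w) = a * (fst u - fst w) + b * (snd u - snd w)"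
    by (simp add: X mv_def algebra_simps)
  have e2: "snd (mv X u) - snd (mv X w) = c * (fst u - fst w) + d * (snd u - snd w)"
    by (simp add: X mv_def algebra_simps)
  show ?thesis using h unfolding vc_def e1 e2 by simp
qed

lemma vc_mono: "m dvd k \<Longrightarrow> vc k u w \<Longrightarrow> vc m u w"
  by (auto simp: vc_def intro: dvd_trans)

lemma fx_sub: "fx p q m a u \<Longrightarrow> fx p q m b u \<Longrightarrow> b \<le> a \<Longrightarrow> fx p q m (a - b) u"
proof -
  assume ha: "fx p q m a u" and hb: "fx p q m b u" and le: "b \<le> a"
  have eq: "mv (cat_matpow p q a) u = mv (cat_matpow p q (a-b)) (mv (cat_matpow p q b) u)"
    using mv_pow_add[of p q "a-b" b u] le by simp
  have "vc m (mv (cat_matpow p q (a-b)) (mv (cat_matpow p q b) u)) (mv (cat_matpow p q (a-b)) u)"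
    using hb by (simp add: fx_def vc_lin)
  hence "vc m (mv (cat_matpow p q a) u) (mv (cat_matpow p q (a-b)) u)" using eq by simp
  thus ?thesis using ha unfolding fx_def by (meson vc_sym vc_trans)
qed

lemma fx_add: "fx p q m a u \<Longrightarrow> fx p q m b u \<Longrightarrow> fx p q m (a + b) u"
proof -
  assume ha: "fx p q m a u" and hb: "fx p q m b u"
  have "vc m (mv (cat_matpow p q a) (mv (cat_matpow p q b) u)) (mv (cat_matpow p q a) u)"
    using hb by (simp add: fx_def vc_lin)
  thus ?thesis using ha unfolding fx_def mv_pow_add by (meson vc_trans)
qed

lemma fx_mult: "fx p q m a u \<Longrightarrow> fx p q m (a * k) u"
proof (induction k)
  case 0 then show ?case by (simp add: fx_def mv_def)
next
  case (Suc k) then show ?case using fx_add[of p q m a u "a*k"] by (simp add: add.commute)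
qed

lemma fx_0: "fx p q m 0 u" by (simp add: fx_def mv_def)

lemma mI_fx: "mI p q m n \<Longrightarrow> fx p q m n u"
proof -
  assume h: "mI p q m n"
  obtain a b c d where X: "cat_matpow p q n = (a,b,c,d)" by (cases "cat_matpow p q n") auto
  from h have h1: "m dvd a - 1" and h2: "m dvd c" and h3: "m dvd b" and h4: "m dvd d - 1"
    by (simp_all add: mI_def fx_def vc_def X mv_def)
  have e1: "a * fst u + b * snd u - fst u = (a - 1) * fst u + b * snd u" by algebra
  have e2: "c * fst u + d * snd u - snd u = c * fst u + (d - 1) * snd u" by algebra
  have "m dvd (a - 1) * fst u + b * snd u" using h1 h3 by simp
  moreover have "m dvd c * fst u + (d - 1) * snd u" using h2 h4 by simp
  ultimately show ?thesis unfolding fx_def vc_def X mv_def by (simp only: e1 e2 prod.case fst_conv snd_conv)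
qed

lemma mI_cong: "mat2_cong (cat_matpow p q n) (1,0,0,1) m \<longleftrightarrow> mI p q m n"
  by (cases "cat_matpow p q n") (auto simp add: mat2_cong_def mI_def fx_def vc_def mv_def mod_eq_dvd_iff)


lemma mI_entries: "mI p q m n \<longleftrightarrow> (case cat_matpow p q n of (a,b,c,d) \<Rightarrow>
   m dvd a - 1 \<and> m dvd b \<and> m dvd c \<and> m dvd d - 1)"
  by (cases "cat_matpow p q n") (auto simp: mI_def fx_def vc_def mv_def)

lemma C1: "cat_matpow p q 1 = (1, p, q, 1+p*q)"
  by (simp add: cat_mat_def mat2_mult_def)
lemma C1': "cat_matpow p q (Suc 0) = (1, p, q, 1+p*q)"
  by (simp add: cat_mat_def mat2_mult_def)
lemma C2: "cat_matpow p q 2 = (1+p*q, p*(2+p*q), q*(2+p*q), 1 + p*q*(3+p*q))"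
  by (simp add: cat_mat_def mat2_mult_def numeral_2_eq_2 algebra_simps power2_eq_square)
lemma C3: "cat_matpow p q 3 = (1 + (3+p*q)*(p*q), (3+p*q)*((p*q+1)*p), (3+p*q)*((p*q+1)*q),
   1 + (3+p*q)*((p*q+1)*(1+p*q) - 1))"
proof -
  have "cat_matpow p q 3 = mat2_mult (cat_mat p q) (cat_matpow p q 2)"
    by (simp add: numeral_3_eq_3 numeral_2_eq_2)
  thus ?thesis by (simp add: C2 cat_mat_def mat2_mult_def algebra_simps)
qed

lemma mI_T1: "mI p q 2 (T1 p q)"
proof (cases "odd p \<and> odd q")
  case True
  have T: "T1 p q = 3" using True by (simp add: T1_def)
  have ev: "even (3 + p*q)" using True by simp
  show ?thesis using ev by (simp add: T C3 mI_entries)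
next
  case False
  show ?thesis
  proof (cases "odd p \<or> odd q")
    case True
    have T: "T1 p q = 2" using True False by (auto simp add: T1_def)
    have ev: "even (p*q)" using False by auto
    show ?thesis using ev True by (auto simp add: T C2 mI_entries)
  next
    case F2: False
    have T: "T1 p q = 1" using F2 by (auto simp add: T1_def)
    show ?thesis unfolding mI_entries T C1 using F2 by auto
  qed
qed


lemma fx_entries: "cat_matpow p q n = (a,b,c,d) \<Longrightarrow> u = (x,y) \<Longrightarrow>
   fx p q m n u \<longleftrightarrow> m dvd a*x + b*y - x \<and> m dvd c*x + d*y - y"
  by (simp add: fx_def vc_def mv_def)

lemma pow_double: "cat_matpow p q (2*n) = mat2_mult (cat_matpow p q n) (cat_matpow p q n)"
  using matpow_add[of p q n n] by (simp add: mult_2)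

lemma fx_double:
  assumes all2: "\<And>w. fx p q 2 n w" and h: "fx p q (2^f) n u"
  shows "fx p q (2^(f+1)) (2*n) u"
proof -
  obtain a b c d where X: "cat_matpow p q n = (a,b,c,d)" by (cases "cat_matpow p q n") auto
  obtain x y where u: "u = (x,y)" by (cases u) auto
  have "2^f dvd a*x + b*y - x" "2^f dvd c*x + d*y - y" using h fx_entries[OF X u] by auto
  then obtain k1 k2 where k1: "a*x + b*y - x = 2^f * k1" and k2: "c*x + d*y - y = 2^f * k2"
    unfolding dvd_def by blast
  have "2 dvd a*k1 + b*k2 - k1" "2 dvd c*k1 + d*k2 - k2" using all2[of "(k1,k2)"] fx_entries[OF X refl] by auto
  then obtain j1 j2 where j1: "a*k1 + b*k2 - k1 = 2 * j1" and j2: "c*k1 + d*k2 - k2 = 2 * j2"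
    unfolding dvd_def by blast
  have X2: "cat_matpow p q (2*n) = (a*a + b*c, a*b + b*d, c*a + d*c, c*b + d*d)"
    by (simp add: pow_double X mat2_mult_def)
  have ax: "a*x + b*y = x + 2^f*k1" using k1 by simp
  have cx: "c*x + d*y = y + 2^f*k2" using k2 by simp
  have ak: "a*k1 + b*k2 = k1 + 2*j1" using j1 by simp
  have ck: "c*k1 + d*k2 = k2 + 2*j2" using j2 by simp
  have e1: "(a*a + b*c)*x + (a*b + b*d)*y - x = a*(a*x+b*y) + b*(c*x+d*y) - x" by algebra
  also have "\<dots> = (a*x + b*y - x) + a*(a*x + b*y - x) + b*(c*x + d*y - y)" by algebra
  also have "\<dots> = 2^f*k1 + 2^f * (a*k1 + b*k2)" unfolding k1 k2 by algebra
  also have "\<dots> = 2^(f+1) * (k1 + j1)" unfolding ak by (simp add: algebra_simps)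
  finally have E1: "(a*a + b*c)*x + (a*b + b*d)*y - x = 2^(f+1) * (k1 + j1)" .
  have e2: "(c*a + d*c)*x + (c*b + d*d)*y - y = c*(a*x+b*y) + d*(c*x+d*y) - y" by algebra
  also have "\<dots> = (c*x + d*y - y) + c*(a*x + b*y - x) + d*(c*x + d*y - y)" by algebra
  also have "\<dots> = 2^f*k2 + 2^f * (c*k1 + d*k2)" unfolding k1 k2 by algebra
  also have "\<dots> = 2^(f+1) * (k2 + j2)" unfolding ck by (simp add: algebra_simps)
  finally have E2: "(c*a + d*c)*x + (c*b + d*d)*y - y = 2^(f+1) * (k2 + j2)" .
  show ?thesis using fx_entries[OF X2 u] E1 E2 by simp
qed

lemma odd_coprime_dvd:
  fixes k z :: int
  assumes "odd k" "2^f dvd k * z" shows "2^f dvd z"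
proof -
  have "coprime ((2::int)^f) k" using assms(1) by (simp add: coprime_commute)
  thus ?thesis using assms(2) by (simp add: coprime_dvd_mult_right_iff)
qed

lemma fx_half:
  assumes all2: "\<And>w. fx p q 2 n w" and tr: "tr2 (cat_matpow p q n) mod 8 = 2"
    and h: "fx p q (2^(f+1)) (2*n) u"
  shows "fx p q (2^f) n u"
proof -
  obtain a b c d where X: "cat_matpow p q n = (a,b,c,d)" by (cases "cat_matpow p q n") auto
  obtain x y where u: "u = (x,y)" by (cases u) auto
  have "2 dvd a - 1" "2 dvd c" "2 dvd b" "2 dvd d - 1"
    using all2[of "(1,0)"] all2[of "(0,1)"] fx_entries[OF X refl] by auto
  then obtain y1 y2 y3 y4 where
    "a - 1 = 2*y1" "c = 2*y3" "b = 2*y2" "d - 1 = 2*y4"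
    unfolding dvd_def by metis
  hence a: "a = 1 + 2*y1" and b: "b = 2*y2" and c: "c = 2*y3" and d: "d = 1 + 2*y4" by auto
  have det: "a*d - b*c = 1" using det_pow[of p q n] by (simp add: X det2_def)
  have trr: "(a + d) mod 8 = 2" using tr by (simp add: X tr2_def)
  define S where "S = y1 + y4"
  define P where "P = y1*y4 - y2*y3"
  have dS: "2*S + 4*P = 0" using det unfolding a b c d S_def P_def by algebra
  have tS: "(2 + 2*S) mod 8 = 2" using trr unfolding a d S_def by (simp add: algebra_simps)
  have oddW: "odd (1 + S + P)" using dS tS by presburger
  define z1 where "z1 = a*x + b*y - x"
  define z2 where "z2 = c*x + d*y - y"
  define w1 where "w1 = (1+y1)*z1 + y2*z2"
  define w2 where "w2 = y3*z1 + (1+y4)*z2"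
  have X2: "cat_matpow p q (2*n) = (a*a + b*c, a*b + b*d, c*a + d*c, c*b + d*d)"
    by (simp add: pow_double X mat2_mult_def)
  have E1: "(a*a + b*c)*x + (a*b + b*d)*y - x = 2 * w1"
    unfolding w1_def z1_def z2_def a b c d by algebra
  have E2: "(c*a + d*c)*x + (c*b + d*d)*y - y = 2 * w2"
    unfolding w2_def z1_def z2_def a b c d by algebra
  from h have "2^(f+1) dvd 2*w1" "2^(f+1) dvd 2*w2" using fx_entries[OF X2 u] E1 E2 by auto
  hence dw1: "2^f dvd w1" and dw2: "2^f dvd w2" by (simp_all add: power_Suc)
  have "(1+S+P) * z1 = (1+y4)*w1 - y2*w2" unfolding w1_def w2_def S_def P_def by algebra
  hence "2^f dvd (1+S+P)*z1" using dw1 dw2 by simp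
  hence dz1: "2^f dvd z1" using oddW odd_coprime_dvd by blast
  have "(1+S+P) * z2 = (1+y1)*w2 - y3*w1" unfolding w1_def w2_def S_def P_def by algebra
  hence "2^f dvd (1+S+P)*z2" using dw1 dw2 by simp
  hence dz2: "2^f dvd z2" using oddW odd_coprime_dvd by blast
  show ?thesis using fx_entries[OF X u] dz1 dz2 unfolding z1_def z2_def by simp
qed

lemma tr_mod8_of_mI4:
  assumes "mI p q 4 n" shows "tr2 (cat_matpow p q n) mod 8 = 2"
proof -
  obtain a b c d where X: "cat_matpow p q n = (a,b,c,d)" by (cases "cat_matpow p q n") auto
  have "4 dvd a - 1" "4 dvd c" "4 dvd b" "4 dvd d - 1"
    using assms fx_entries[OF X refl] unfolding mI_def by auto
  then obtain y1 y2 y3 y4 where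
    "a - 1 = 4*y1" "c = 4*y3" "b = 4*y2" "d - 1 = 4*y4"
    unfolding dvd_def by metis
  hence a: "a = 1 + 4*y1" and b: "b = 4*y2" and c: "c = 4*y3" and d: "d = 1 + 4*y4" by auto
  have det: "a*d - b*c = 1" using det_pow[of p q n] by (simp add: X det2_def)
  define S where "S = y1 + y4"
  define P where "P = y1*y4 - y2*y3"
  have dS: "4*S + 16*P = 0" using det unfolding a b c d S_def P_def by algebra
  have "a + d = 2 + 4*S" unfolding a d S_def by simp
  hence "(a+d) mod 8 = 2" using dS by presburger
  thus ?thesis by (simp add: X tr2_def)
qed


lemma closed_dvd:
  assumes cl: "\<And>a b. Q a \<Longrightarrow> Q b \<Longrightarrow> b \<le> a \<Longrightarrow> Q (a - b)"
    and t: "Q t" "t \<ge> 1" and mn: "\<And>j. 1 \<le> j \<Longrightarrow> j < t \<Longrightarrow> \<not> Q j"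
    and k: "Q (k::nat)"
  shows "t dvd k"
  using k
proof (induction k rule: less_induct)
  case (less k)
  show ?case
  proof (cases "k < t")
    case True
    then have "k = 0" using mn less.prems by (metis less_one not_le)
    then show ?thesis by simp
  next
    case False
    then have "Q (k - t)" using cl less.prems t by simp
    moreover have "k - t < k" using False t by simp
    ultimately have "t dvd k - t" using less.IH by blast
    then show ?thesis using False by (metis dvd_diff_nat dvd_refl le_add_diff_inverse not_less dvd_add)
  qed
qed

lemma least_props:
  assumes "Q k" "k \<ge> (1::nat)"
  defines "t \<equiv> (LEAST n. n \<ge> 1 \<and> Q n)"
  shows "t \<ge> 1" "Q t" "\<And>j. 1 \<le> j \<Longrightarrow> j < t \<Longrightarrow> \<not> Q j" "t \<le> k"
proof -
  have "t \<ge> 1 \<and> Q t" unfolding t_def using LeastI[of "\<lambda>n. n \<ge> 1 \<and> Q n" k] assms by blast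
  thus "t \<ge> 1" "Q t" by auto
  show "\<And>j. 1 \<le> j \<Longrightarrow> j < t \<Longrightarrow> \<not> Q j" unfolding t_def using not_less_Least by blast
  show "t \<le> k" unfolding t_def using Least_le[of "\<lambda>n. n \<ge> 1 \<and> Q n" k] assms by blast
qed

lemma mI_sub: "mI p q m a \<Longrightarrow> mI p q m b \<Longrightarrow> b \<le> a \<Longrightarrow> mI p q m (a - b)"
  by (simp add: mI_def fx_sub)
lemma mI_mult: "mI p q m a \<Longrightarrow> mI p q m (a * k)"
  by (simp add: mI_def fx_mult)
lemma mI_mono: "m dvd k \<Longrightarrow> mI p q k a \<Longrightarrow> mI p q m a"
  by (auto simp add: mI_def fx_def intro: vc_mono)
lemma fx_mono: "m dvd k \<Longrightarrow> fx p q k a u \<Longrightarrow> fx p q m a u"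
  by (auto simp add: fx_def intro: vc_mono)

lemma T1_cases: "T1 p q = 1 \<or> T1 p q = 2 \<or> T1 p q = 3"
  by (simp add: T1_def)
lemma T1_pos: "T1 p q \<ge> 1" by (simp add: T1_def)

lemma not_mI2_1: "T1 p q \<ge> 2 \<Longrightarrow> \<not> mI p q 2 1"
  by (unfold mI_entries C1) (auto simp: T1_def split: if_splits)

lemma not_mI2_2: "T1 p q = 3 \<Longrightarrow> \<not> mI p q 2 2"
  by (auto simp: T1_def mI_entries C2 split: if_splits)

lemma T1_dvd: "mI p q 2 k \<Longrightarrow> T1 p q dvd k"
proof -
  assume k: "mI p q 2 k"
  show ?thesis
  proof (rule closed_dvd[where Q="mI p q 2"])
    show "\<And>a b. mI p q 2 a \<Longrightarrow> mI p q 2 b \<Longrightarrow> b \<le> a \<Longrightarrow> mI p q 2 (a - b)" by (rule mI_sub)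
    show "mI p q 2 (T1 p q)" by (rule mI_T1)
    show "T1 p q \<ge> 1" by (rule T1_pos)
    show "\<And>j. 1 \<le> j \<Longrightarrow> j < T1 p q \<Longrightarrow> \<not> mI p q 2 j"
    proof -
      fix j assume "1 \<le> j" "j < T1 p q"
      then have "j = 1 \<and> T1 p q \<ge> 2 \<or> j = 2 \<and> T1 p q = 3" using T1_cases[of p q] by auto
      then show "\<not> mI p q 2 j" using not_mI2_1 not_mI2_2 by blast
    qed
    show "mI p q 2 k" by (rule k)
  qed
qed

lemma fx2_all_T1mult: "T1 p q dvd n \<Longrightarrow> fx p q 2 n w"
proof -
  assume "T1 p q dvd n"
  then obtain k where "n = T1 p q * k" by blast
  thus ?thesis using mI_mult[OF mI_T1] mI_fx by blast
qed

lemma P2: "mI p q (2^f) (T1 p q * 2^f)"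
proof (induction f)
  case 0 then show ?case by (simp add: mI_def fx_def vc_def)
next
  case (Suc f)
  have all2: "\<And>w. fx p q 2 (T1 p q * 2^f) w" by (rule fx2_all_T1mult) simp
  have eq: "T1 p q * 2 ^ Suc f = 2 * (T1 p q * 2^f)" by simp
  have eq2: "(2::int) ^ Suc f = 2^(f+1)" by simp
  show ?case unfolding mI_def eq eq2
    using Suc[unfolded mI_def] fx_double[OF all2] by blast
qed

lemma per_props:
  fixes p q :: int and f :: nat and u :: "int \<times> int"
  defines "t \<equiv> per p q f u"
  shows "t \<ge> 1" "fx p q (2^f) t u" "\<And>j. 1 \<le> j \<Longrightarrow> j < t \<Longrightarrow> \<not> fx p q (2^f) j u"
    "\<And>k. fx p q (2^f) k u \<Longrightarrow> t dvd k" "t dvd T1 p q * 2^f"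
proof -
  have ex: "fx p q (2^f) (T1 p q * 2^f) u" using P2 mI_fx by blast
  have pos: "T1 p q * 2^f \<ge> 1" using T1_pos[of p q] by simp
  note L = least_props[where Q="\<lambda>n. fx p q (2^f) n u", OF ex pos]
  show "t \<ge> 1" "fx p q (2^f) t u" "\<And>j. 1 \<le> j \<Longrightarrow> j < t \<Longrightarrow> \<not> fx p q (2^f) j u"
    using L unfolding t_def per_def by auto
  show dk: "\<And>k. fx p q (2^f) k u \<Longrightarrow> t dvd k"
    apply (rule closed_dvd[where Q="\<lambda>n. fx p q (2^f) n u"])
    using L fx_sub unfolding t_def per_def by auto
  show "t dvd T1 p q * 2^f" using dk ex by blast
qed

lemma per_le: "k \<ge> 1 \<Longrightarrow> fx p q (2^f) k u \<Longrightarrow> per p q f u \<le> k"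
  unfolding per_def by (rule Least_le) simp


lemma pow2_dvd: "(t::nat) dvd 2^n \<Longrightarrow> \<exists>i\<le>n. t = 2^i"
  using divides_primepow_nat[OF two_is_prime_nat] by blast

lemma vec2_zero1: "odd p \<Longrightarrow> odd q \<Longrightarrow> fx p q 2 1 w \<Longrightarrow> 2 dvd fst w \<and> 2 dvd snd w"
proof -
  assume op: "odd p" and oq: "odd q" and h: "fx p q 2 1 w"
  obtain x y where w: "w = (x,y)" by (cases w) auto
  have h1: "2 dvd (1*x + p*y - x)" and h2: "2 dvd (q*x + (1+p*q)*y - y)"
    using h unfolding fx_entries[OF C1 w] by auto
  have "1*x + p*y - x = p*y" by simp
  with h1 have ey: "even y" using op by simp
  have "q*x + (1+p*q)*y - y = q*x + p*q*y" by algebra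
  with h2 ey have "even (q*x)" by simp
  hence "even x" using oq by simp
  thus ?thesis using ey w by simp
qed

lemma vec2_zero2: "odd p \<Longrightarrow> odd q \<Longrightarrow> fx p q 2 2 w \<Longrightarrow> 2 dvd fst w \<and> 2 dvd snd w"
proof -
  assume op: "odd p" and oq: "odd q" and h: "fx p q 2 2 w"
  obtain x y where w: "w = (x,y)" by (cases w) auto
  have h1: "even ((1+p*q)*x + p*(2+p*q)*y - x)" and h2: "even (q*(2+p*q)*x + (1 + p*q*(3+p*q))*y - y)"
    using h fx_entries[OF C2 w] by auto
  have e1: "(1+p*q)*x + p*(2+p*q)*y - x = p*(q*x + (2+p*q)*y)" by algebra
  have e2: "q*(2+p*q)*x + (1 + p*q*(3+p*q))*y - y = q*(2+p*q)*x + p*q*(3+p*q)*y" by algebra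
  from h1 have A: "even (q*x + (2+p*q)*y)" unfolding e1 using op by simp
  from h2 have B: "even (q*(2+p*q)*x + p*q*(3+p*q)*y)" unfolding e2 .
  have "even (p*q*(3+p*q)*y)" using op oq by simp
  with B have "even (q*(2+p*q)*x)" by simp
  hence ex: "even x" using op oq by simp
  with A have "even ((2+p*q)*y)" by simp
  hence "even y" using op oq by simp
  thus ?thesis using ex w by simp
qed

lemma vec2_lift:
  assumes all: "\<And>w. fx p q 2 t w \<Longrightarrow> 2 dvd fst w \<and> 2 dvd snd w"
  shows "fx p q (2^f) t u \<Longrightarrow> 2^f dvd fst u \<and> 2^f dvd snd u"
proof (induction f arbitrary: u)
  case 0 then show ?case by simp
next
  case (Suc f)
  have "fx p q 2 t u" using fx_mono[OF _ Suc.prems, of 2] by simp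
  then have "2 dvd fst u" "2 dvd snd u" using all by auto
  then obtain a b where "fst u = 2*a" "snd u = 2*b" unfolding dvd_def by blast
  hence u: "u = (2*a, 2*b)" by (metis prod.collapse)
  obtain al be ga de where X: "cat_matpow p q t = (al,be,ga,de)" by (cases "cat_matpow p q t") auto
  have "2^Suc f dvd al*(2*a) + be*(2*b) - 2*a" "2^Suc f dvd ga*(2*a) + de*(2*b) - 2*b"
    using Suc.prems fx_entries[OF X u] by auto
  moreover have "al*(2*a) + be*(2*b) - 2*a = 2*(al*a + be*b - a)" "ga*(2*a) + de*(2*b) - 2*b = 2*(ga*a + de*b - b)"
    by algebra+
  ultimately have d1: "2*2^f dvd 2*(al*a + be*b - a)" and d2: "2*2^f dvd 2*(ga*a + de*b - b)"
    by (simp_all add: power_Suc)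
  have "2^f dvd al*a + be*b - a" using d1 by (metis dvd_mult_cancel_left zero_neq_numeral mult.assoc)
  moreover have "2^f dvd ga*a + de*b - b" using d2 by (metis dvd_mult_cancel_left zero_neq_numeral mult.assoc)
  ultimately have "2^f dvd al*a + be*b - a" "2^f dvd ga*a + de*b - b" by blast+
  hence "fx p q (2^f) t (a,b)" using fx_entries[OF X refl] by simp
  hence "2^f dvd a \<and> 2^f dvd b" using Suc.IH[of "(a,b)"] by simp
  thus ?case using u by (simp add: power_Suc)
qed

lemma per_T1: "per p q f u = 1 \<or> T1 p q dvd per p q f u"
proof -
  define t where "t = per p q f u"
  note P = per_props[where p=p and q=q and f=f and u=u, folded t_def]
  consider "T1 p q = 1" | "T1 p q = 2" | "T1 p q = 3" using T1_cases by blast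
  then show ?thesis
  proof cases
    case 1 then show ?thesis by simp
  next
    case 2
    have "t dvd 2^(Suc f)" using P(5) 2 by simp
    then obtain i where i: "t = 2^i" using pow2_dvd by blast
    then show ?thesis using 2 unfolding t_def[symmetric] by (cases i) auto
  next
    case 3
    have op: "odd p" and oq: "odd q" using 3 by (auto simp: T1_def split: if_splits)
    show ?thesis
    proof (rule ccontr)
      assume "\<not> (per p q f u = 1 \<or> T1 p q dvd per p q f u)"
      hence n3: "\<not> 3 dvd t" using 3 t_def by auto
      have all: "\<And>w. fx p q 2 t w \<Longrightarrow> 2 dvd fst w \<and> 2 dvd snd w"
      proof -
        fix w assume hw: "fx p q 2 t w"
        have "fx p q 2 (3 * (t div 3)) w" using fx2_all_T1mult[of p q] 3 by simp
        hence "fx p q 2 (t - 3 * (t div 3)) w" using fx_sub[OF hw] by simp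
        hence hm: "fx p q 2 (t mod 3) w" by (simp add: minus_mult_div_eq_mod)
        have "t mod 3 = 1 \<or> t mod 3 = 2" using n3 by presburger
        then show "2 dvd fst w \<and> 2 dvd snd w"
        proof
          assume "t mod 3 = 1"
          then have "fx p q 2 1 w" using hm by metis
          then show ?thesis by (rule vec2_zero1[OF op oq])
        next
          assume "t mod 3 = 2"
          then have "fx p q 2 2 w" using hm by metis
          then show ?thesis by (rule vec2_zero2[OF op oq])
        qed
      qed
      have "2^f dvd fst u \<and> 2^f dvd snd u" using vec2_lift[OF all] P(2) by blast
      moreover obtain x y where u: "u = (x,y)" by (cases u) auto
      ultimately have dx: "2^f dvd x" and dy: "2^f dvd y" by auto
      have "1*x + p*y - x = p*y" "q*x + (1+p*q)*y - y = q*x + p*q*y" by algebra+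
      hence "fx p q (2^f) 1 u" unfolding fx_entries[OF C1 u] using dx dy by simp
      hence "t \<le> 1" unfolding t_def by (rule per_le[rotated]) simp
      hence "t = 1" using P(1) by simp
      thus False using \<open>\<not> (per p q f u = 1 \<or> T1 p q dvd per p q f u)\<close> t_def by simp
    qed
  qed
qed


lemma rG1: "((a+b)/2) + ((a-b)/2) = (a::real)" by (simp add: field_simps)
lemma rG2: assumes "(b::real)^2 = a^2 - 4" shows "((a+b)/2)^2 + ((a-b)/2)^2 = a^2 - 2"
proof -
  have "((a+b)/2)^2 + ((a-b)/2)^2 = (a^2 + b^2)/2" by (simp add: power2_eq_square field_simps)
  thus ?thesis using assms by simp
qed
lemma rG3: assumes "(b::real)^2 = a^2 - 4" shows "((a+b)/2)^3 + ((a-b)/2)^3 = a^3 - 3*a"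
proof -
  have "((a+b)/2)^3 + ((a-b)/2)^3 = (a^3 + 3*a*b^2)/4" by (simp add: power2_eq_square power3_eq_cube field_simps)
  also have "\<dots> = (a^3 + 3*a*(a^2 - 4))/4" using assms by simp
  also have "\<dots> = a^3 - 3*a" by (simp add: field_simps power2_eq_square power3_eq_cube algebra_simps)
  finally show ?thesis .
qed
lemma rH2: "(b::real) \<noteq> 0 \<Longrightarrow> (1/b) * (((a+b)/2)^2 - ((a-b)/2)^2) = a"
  by (simp add: field_simps power2_eq_square)
lemma rH3: assumes "(b::real)^2 = a^2 - 4" "b \<noteq> 0" shows "(1/b) * (((a+b)/2)^3 - ((a-b)/2)^3) = a^2 - 1"
proof -
  have "((a+b)/2)^3 - ((a-b)/2)^3 = b*(3*a^2 + b^2)/4" by (simp add: power2_eq_square power3_eq_cube field_simps)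
  hence "(1/b) * (((a+b)/2)^3 - ((a-b)/2)^3) = (3*a^2 + b^2)/4" using assms(2) by simp
  also have "\<dots> = (3*a^2 + (a^2 - 4))/4" using assms(1) by simp
  also have "\<dots> = a^2 - 1" by (simp add: field_simps)
  finally show ?thesis .
qed

lemma catA_ge: "p > 0 \<Longrightarrow> q > 0 \<Longrightarrow> catA p q \<ge> 3"
proof -
  assume "p > 0" "q > 0"
  hence "p*q > 0" by simp
  hence "p*q \<ge> 1" by simp
  thus ?thesis by (simp add: catA_def)
qed

lemma catB_props:
  assumes "p > 0" "q > 0"
  shows "(catB p q)^2 = (of_int (catA p q))^2 - 4" "catB p q \<noteq> 0"
proof -
  have A3: "catA p q \<ge> 3" using catA_ge assms by blast
  hence "(of_int (catA p q)::real) \<ge> 3" by simp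
  hence pos: "(of_int (catA p q)::real)^2 - 4 > 0"
  proof -
    have "(of_int (catA p q)::real)^2 \<ge> 3^2" using \<open>(of_int (catA p q)::real) \<ge> 3\<close> by (rule power_mono) simp
    thus ?thesis by simp
  qed
  show "(catB p q)^2 = (of_int (catA p q))^2 - 4" unfolding catB_def using pos by simp
  show "catB p q \<noteq> 0" unfolding catB_def using pos by simp
qed



lemma catG_1: "catG p q 1 = catA p q"
  unfolding catG_def using rG1[of "of_int (catA p q)" "catB p q"] by simp

lemma catG_2: "p > 0 \<Longrightarrow> q > 0 \<Longrightarrow> catG p q 2 = (catA p q)^2 - 2"
proof -
  assume "p > 0" "q > 0"
  note B = catB_props[OF this]
  have "((of_int (catA p q) + catB p q)/2)^2 + ((of_int (catA p q) - catB p q)/2)^2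
        = of_int ((catA p q)^2 - 2)" using rG2[OF B(1)] by simp
  thus ?thesis unfolding catG_def by (simp only: floor_of_int)
qed

lemma catG_3: "p > 0 \<Longrightarrow> q > 0 \<Longrightarrow> catG p q 3 = (catA p q)^3 - 3 * catA p q"
proof -
  assume "p > 0" "q > 0"
  note B = catB_props[OF this]
  have "((of_int (catA p q) + catB p q)/2)^3 + ((of_int (catA p q) - catB p q)/2)^3
        = of_int ((catA p q)^3 - 3 * catA p q)" using rG3[OF B(1)] by simp
  thus ?thesis unfolding catG_def by (simp only: floor_of_int)
qed

lemma catH_2: "p > 0 \<Longrightarrow> q > 0 \<Longrightarrow> catH p q 2 = catA p q"
proof -
  assume "p > 0" "q > 0"
  note B = catB_props[OF this]
  have "(1 / catB p q) * (((of_int (catA p q) + catB p q)/2)^2 - ((of_int (catA p q) - catB p q)/2)^2)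
        = of_int (catA p q)" using rH2[OF B(2)] by simp
  thus ?thesis unfolding catH_def by (simp only: floor_of_int)
qed

lemma catH_3: "p > 0 \<Longrightarrow> q > 0 \<Longrightarrow> catH p q 3 = (catA p q)^2 - 1"
proof -
  assume "p > 0" "q > 0"
  note B = catB_props[OF this]
  have "(1 / catB p q) * (((of_int (catA p q) + catB p q)/2)^3 - ((of_int (catA p q) - catB p q)/2)^3)
        = of_int ((catA p q)^2 - 1)" using rH3[OF B(1) B(2)] by simp
  thus ?thesis unfolding catH_def by (simp only: floor_of_int)
qed



lemma tr_1: "tr2 (cat_matpow p q 1) = catA p q"
  unfolding C1 by (simp add: tr2_def catA_def)
lemma tr_2: "tr2 (cat_matpow p q 2) = (catA p q)^2 - 2"
  unfolding C2 by (simp add: tr2_def catA_def power2_eq_square algebra_simps)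
lemma tr_3: "tr2 (cat_matpow p q 3) = (catA p q)^3 - 3 * catA p q"
  unfolding C3 by (simp add: tr2_def catA_def power3_eq_cube algebra_simps)



lemma catG_T1: assumes "p > 0" "q > 0" shows "catG p q (T1 p q) = tr2 (cat_matpow p q (T1 p q))"
proof -
  consider "T1 p q = 1" | "T1 p q = 2" | "T1 p q = 3" using T1_cases by blast
  then show ?thesis
  proof cases
    case 1 then show ?thesis by (simp only: catG_1 tr_1)
  next
    case 2 then show ?thesis using assms by (simp only: catG_2 tr_2)
  next
    case 3 then show ?thesis using assms by (simp only: catG_3 tr_3)
  qed
qed

lemma v2_ge: assumes "x \<noteq> 0" "(2::int)^k dvd x" shows "k \<le> v2 x"
proof -
  have bnd: "\<forall>y. (2::int)^y dvd x \<longrightarrow> y \<le> nat \<bar>x\<bar>"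
  proof (intro allI impI)
    fix y assume "(2::int)^y dvd x"
    hence "\<bar>(2::int)^y\<bar> \<le> \<bar>x\<bar>" using assms(1) dvd_imp_le_int by blast
    hence le: "(2::int)^y \<le> \<bar>x\<bar>" by simp
    have "y < 2^y" by (rule less_exp)
    hence "int y < int (2^y)" by (simp only: of_nat_less_iff)
    hence "int y < 2^y" by simp
    with le show "y \<le> nat \<bar>x\<bar>" by linarith
  qed
  have "k \<le> (GREATEST y. (2::int)^y dvd x)"
    using Greatest_le_nat[of "\<lambda>y. (2::int)^y dvd x" k "nat \<bar>x\<bar>"] assms(2) bnd by blast
  thus ?thesis unfolding v2_def .
qed


lemma hhat_ge: "hhat p q \<ge> -1" by (simp add: hhat_def)

lemma v2_even: "x \<noteq> 0 \<Longrightarrow> even x \<Longrightarrow> v2 x \<ge> 1"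
  using v2_ge[of x 1] by simp

lemma es_bound:
  assumes p: "p > 0" and q: "q > 0"
  shows "e_s p q \<ge> 1 + int (m0 p q)"
proof -
  have x0: "x0 p q \<ge> 0" by (simp add: x0_def)
  have A3: "catA p q \<ge> 3" using catA_ge p q by blast
  have main: "int (e_sh p q) + hhat p q \<ge> 1"
  proof (cases "odd p \<and> odd q")
    case True
    hence T: "T1 p q = 3" by (simp add: T1_def)
    have oA: "odd (catA p q)" using True by (simp add: catA_def)
    have "2 dvd catA p q - 1" "2 dvd catA p q + 1" using oA by presburger+
    hence "2*2 dvd (catA p q - 1) * (catA p q + 1)" by (rule mult_dvd_mono)
    moreover have "(catA p q - 1) * (catA p q + 1) = (catA p q)^2 - 1" by (simp add: power2_eq_square algebra_simps)
    ultimately have d4: "2^2 dvd (catA p q)^2 - 1" by simp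
    have nz: "(catA p q)^2 - 1 \<noteq> 0"
    proof -
      have "(catA p q)^2 \<ge> 3^2" using A3 by (intro power_mono) auto
      thus ?thesis by simp
    qed
    have "e_sh p q \<ge> 2" unfolding e_sh_def T catH_3[OF p q] using v2_ge[OF nz d4] .
    thus ?thesis using hhat_ge[of p q] by simp
  next
    case False
    show ?thesis
    proof (cases "odd p \<or> odd q")
      case True
      hence T: "T1 p q = 2" using False by (simp add: T1_def)
      have eA: "even (catA p q)" using False by (auto simp: catA_def)
      have "e_sh p q \<ge> 1" unfolding e_sh_def T catH_2[OF p q] using v2_even eA A3 by simp
      moreover have "hhat p q \<ge> 0"
      proof -
        have "v2 p \<ge> 1 \<or> v2 q \<ge> 1" using False p q v2_even[of p] v2_even[of q] by auto
        thus ?thesis by (auto simp: hhat_def)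
      qed
      ultimately show ?thesis by simp
    next
      case F2: False
      have "v2 p \<ge> 1" "v2 q \<ge> 1" using F2 p q v2_even[of p] v2_even[of q] by auto
      hence "hhat p q \<ge> 1" by (auto simp: hhat_def)
      thus ?thesis by simp
    qed
  qed
  show ?thesis unfolding e_s_def using main x0 by simp
qed

lemma g0_def': "cat_period p q s = (LEAST n. n \<ge> 1 \<and> mI p q (2^s) n)"
  unfolding cat_period_def mI_cong ..

lemma g0_props:
  fixes p q :: int and s :: nat
  defines "g \<equiv> cat_period p q s"
  shows "g \<ge> 1" "mI p q (2^s) g" "g dvd T1 p q * 2^s" "s \<ge> 1 \<Longrightarrow> T1 p q dvd g"
proof -
  have ex: "mI p q (2^s) (T1 p q * 2^s)" by (rule P2)
  have pos: "T1 p q * 2^s \<ge> 1" using T1_pos[of p q] by simp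
  note L = least_props[where Q="mI p q (2^s)", OF ex pos]
  show g1: "g \<ge> 1" and g2: "mI p q (2^s) g" using L unfolding g_def g0_def' by auto
  show "g dvd T1 p q * 2^s"
    apply (rule closed_dvd[where Q="mI p q (2^s)"])
    using L mI_sub ex unfolding g_def g0_def' by auto
  assume "s \<ge> 1"
  hence "(2::int) dvd 2^s" by (simp add: dvd_power)
  hence "mI p q 2 g" using mI_mono g2 by blast
  thus "T1 p q dvd g" by (rule T1_dvd)
qed

lemma T1_pow_form: "t dvd T1 p q * 2^f \<Longrightarrow> T1 p q dvd t \<Longrightarrow> \<exists>i. t = T1 p q * 2^i"
proof -
  assume a: "t dvd T1 p q * 2^f" and b: "T1 p q dvd t"
  then obtain k where k: "t = T1 p q * k" by blast
  have "k dvd 2^f" using a k T1_pos[of p q] by simp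
  then obtain i where "k = 2^i" using pow2_dvd by blast
  thus ?thesis using k by blast
qed

lemma tr_even_T1: "even (tr2 (cat_matpow p q (T1 p q)))"
proof -
  obtain a b c d where X: "cat_matpow p q (T1 p q) = (a,b,c,d)" by (cases "cat_matpow p q (T1 p q)") auto
  have "2 dvd a - 1" "2 dvd d - 1" using mI_T1[of p q] unfolding mI_entries X by auto
  hence "even (a + d)" by presburger
  thus ?thesis by (simp add: X tr2_def)
qed

lemma tr_pow_mod8:
  assumes "tr2 (cat_matpow p q n) mod 8 = 2"
  shows "tr2 (cat_matpow p q (n * 2^k)) mod 8 = 2"
proof (induction k)
  case 0 then show ?case using assms by simp
next
  case (Suc k)
  define g where "g = tr2 (cat_matpow p q (n * 2^k))"
  have "n * 2^Suc k = 2 * (n * 2^k)" by simp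
  hence e: "tr2 (cat_matpow p q (n * 2^Suc k)) = g^2 - 2" unfolding g_def by (simp only: tr_double)
  obtain j where "g = 8*j + 2" using Suc[folded g_def] by (metis mod_div_mult_eq add.commute mult.commute)
  define X where "X = 8*j*j + 4*j"
  have "g^2 - 2 = 8*X + 2" unfolding X_def using \<open>g = 8*j + 2\<close> by (simp add: power2_eq_square algebra_simps)
  moreover have "(8*X + 2) mod 8 = 2" by simp
  ultimately show ?case unfolding e by simp
qed


lemma K:
  assumes p: "p > 0" and q: "q > 0"
    and gt: "per p q e u > cat_period p q (nat (e_s p q))"
  shows "per p q (e+1) u = 2 * per p q e u"
proof -
  define s where "s = nat (e_s p q)"
  define g where "g = cat_period p q s"
  define t where "t = per p q e u"
  define T where "T = T1 p q"
  have s1: "s \<ge> 1 + m0 p q" using es_bound[OF p q] unfolding s_def by linarith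
  note G = g0_props[where p=p and q=q and s=s, folded g_def]
  have gt': "t > g" using gt unfolding t_def g_def s_def .
  have Tg: "T dvd g" using G(4) s1 unfolding T_def by simp
  obtain i where gi: "g = T * 2^i" using T1_pow_form[OF G(3) Tg[unfolded T_def]] unfolding T_def by blast
  note P = per_props[where p=p and q=q and f=e and u=u, folded t_def]
  have "t \<noteq> 1" using gt' G(1) by simp
  hence Tt: "T dvd t" using per_T1[of p q e u] unfolding t_def T_def by simp
  obtain j where tj: "t = T * 2^j" using T1_pow_form[OF P(5) Tt[unfolded T_def]] unfolding T_def by blast
  have Tpos: "T \<ge> 1" unfolding T_def by (rule T1_pos)
  have "(2::nat)^i < 2^j" using gt' gi tj Tpos by simp
  hence ij: "i < j" by simp
  define n where "n = T * 2^(j-1)"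
  have tn: "t = 2 * n" unfolding n_def tj using ij by (cases j) auto
  have n1: "1 \<le> n" "n < t" using tn P(1) by auto
  have all2n: "\<And>w. fx p q 2 n w" using fx2_all_T1mult[of p q n] unfolding n_def T_def by simp
  have all2t: "\<And>w. fx p q 2 t w" using fx2_all_T1mult[of p q t] Tt unfolding T_def by simp
  have trn: "tr2 (cat_matpow p q n) mod 8 = 2"
  proof (cases "s \<ge> 2")
    case True
    have "g dvd n" unfolding gi n_def using ij by (simp add: le_imp_power_dvd)
    then obtain k where "n = g * k" by blast
    hence "mI p q (2^s) n" using mI_mult[OF G(2)] by simp
    moreover have "(4::int) dvd 2^s" using True le_imp_power_dvd[of 2 s "2::int"] by simp
    ultimately have "mI p q 4 n" using mI_mono by blast
    thus ?thesis by (rule tr_mod8_of_mI4)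
  next
    case False
    hence "m0 p q = 0" using s1 by simp
    hence "(catG p q (T1 p q) div 2) mod 4 = 1" unfolding m0_def by (simp split: if_splits)
    hence "(tr2 (cat_matpow p q (T1 p q)) div 2) mod 4 = 1" using catG_T1[OF p q] by simp
    hence "tr2 (cat_matpow p q (T1 p q)) mod 8 = 2" using tr_even_T1[of p q] by presburger
    thus ?thesis unfolding n_def T_def by (rule tr_pow_mod8)
  qed
  have d2: "fx p q (2^(e+1)) (2*t) u" using fx_double[OF all2t P(2)] .
  define t' where "t' = per p q (e+1) u"
  note P' = per_props[where p=p and q=q and f="e+1" and u=u, folded t'_def]
  have "t' dvd 2*t" using P'(4)[OF d2] .
  moreover have "t dvd t'"
  proof -
    have "fx p q (2^e) t' u" using fx_mono[OF _ P'(2), of "2^e"] by simp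
    thus ?thesis using P(4) by blast
  qed
  moreover obtain k where k1: "t' = t * k" using \<open>t dvd t'\<close> by blast
  ultimately have "t * k dvd t * 2" by (simp add: mult.commute)
  hence k2: "k dvd 2" using P(1) by simp
  note k = k1 k2
  have "k \<le> 2" using k2 by (simp add: dvd_imp_le)
  moreover have "k \<noteq> 0" using k2 by (rule contrapos_pn) simp
  ultimately have "k = 1 \<or> k = 2" by auto
  moreover have "k \<noteq> 1"
  proof
    assume "k = 1"
    hence "fx p q (2^(e+1)) (2*n) u" using P'(2) k(1) tn by simp
    hence "fx p q (2^e) n u" by (rule fx_half[OF all2n trn])
    thus False using P(3)[OF n1] by simp
  qed
  ultimately have "k = 2" by blast
  thus ?thesis using k(1) unfolding t'_def t_def by simp
qed

lemma K':
  assumes p: "p > 0" and q: "q > 0"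
    and gt: "Tc > cat_period p q (nat (e_s p q))"
    and h: "per p q (e+1) u = 2 * Tc"
  shows "per p q e u = Tc"
proof -
  define s where "s = nat (e_s p q)"
  define g where "g = cat_period p q s"
  define r where "r = per p q e u"
  have s1: "s \<ge> 1 + m0 p q" using es_bound[OF p q] unfolding s_def by linarith
  note G = g0_props[where p=p and q=q and s=s, folded g_def]
  have gt': "Tc > g" using gt unfolding g_def s_def .
  note P = per_props[where p=p and q=q and f=e and u=u, folded r_def]
  note P' = per_props[where p=p and q=q and f="e+1" and u=u, unfolded h]
  show ?thesis
  proof (cases "r > g")
    case True
    have "per p q (e+1) u = 2 * r" using K[OF p q] True unfolding r_def g_def s_def by blast
    thus ?thesis using h unfolding r_def by simp
  next
    case False
    define n0 where "n0 = (if r = 1 then T1 p q else r)"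
    have Tn0: "T1 p q dvd n0" using per_T1[of p q e u] unfolding n0_def r_def by auto
    have rn0: "r dvd n0" unfolding n0_def by auto
    have Tg: "T1 p q \<le> g" using G(4) s1 G(1) by (simp add: dvd_imp_le)
    have n0g: "n0 \<le> g" unfolding n0_def using False Tg by auto
    obtain c where "n0 = r * c" using rn0 by blast
    hence "fx p q (2^e) n0 u" using P(2) fx_mult by simp
    hence "fx p q (2^(e+1)) (2*n0) u" using fx_double fx2_all_T1mult[OF Tn0] by blast
    hence "2 * Tc dvd 2 * n0" using P'(4) by blast
    moreover have "n0 \<ge> 1" unfolding n0_def using P(1) T1_pos[of p q] by auto
    ultimately have "2*Tc \<le> 2*n0" by (simp add: dvd_imp_le)
    thus ?thesis using n0g gt' by simp
  qed
qed


definition ppf :: "('a \<Rightarrow> 'a) \<Rightarrow> 'a \<Rightarrow> nat" where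
  "ppf f v = (LEAST n. n \<ge> 1 \<and> (f ^^ n) v = v)"
definition orbf :: "('a \<Rightarrow> 'a) \<Rightarrow> 'a \<Rightarrow> 'a set" where
  "orbf f v = {(f ^^ k) v | k. True}"

lemma funpow_apply_add: "(f ^^ (m + n)) v = (f ^^ m) ((f ^^ n) v)"
  by (simp add: funpow_add)

lemma ppf_props:
  assumes "(f ^^ n) v = v" "n \<ge> 1"
  shows "ppf f v \<ge> 1" "(f ^^ ppf f v) v = v" "\<And>j. 1 \<le> j \<Longrightarrow> j < ppf f v \<Longrightarrow> (f ^^ j) v \<noteq> v"
  using least_props[where Q="\<lambda>n. (f ^^ n) v = v", OF assms] unfolding ppf_def by auto

lemma funpow_mod:
  assumes "(f ^^ t) v = v"
  shows "(f ^^ k) v = (f ^^ (k mod t)) v"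
proof -
  have "(f ^^ (t*j + r)) v = (f ^^ r) v" for j r
  proof (induction j)
    case 0 then show ?case by simp
  next
    case (Suc j)
    have "t * Suc j + r = (t*j + r) + t" by simp
    then show ?case using Suc assms by (simp only: funpow_apply_add)
  qed
  from this[of "k div t" "k mod t"] show ?thesis by simp
qed

lemma orbf_image:
  assumes "(f ^^ t) v = v" "t \<ge> 1"
  shows "orbf f v = (\<lambda>k. (f ^^ k) v) ` {..<t}"
proof
  show "orbf f v \<subseteq> (\<lambda>k. (f ^^ k) v) ` {..<t}"
  proof
    fix w assume "w \<in> orbf f v"
    then obtain k where "w = (f ^^ k) v" unfolding orbf_def by blast
    hence "w = (f ^^ (k mod t)) v" using funpow_mod[OF assms(1)] by simp
    moreover have "k mod t < t" using assms(2) by simp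
    ultimately show "w \<in> (\<lambda>k. (f ^^ k) v) ` {..<t}" by blast
  qed
  show "(\<lambda>k. (f ^^ k) v) ` {..<t} \<subseteq> orbf f v" unfolding orbf_def by blast
qed

lemma card_orbf:
  assumes "(f ^^ n) v = v" "n \<ge> 1"
  shows "card (orbf f v) = ppf f v"
proof -
  define t where "t = ppf f v"
  note P = ppf_props[OF assms, folded t_def]
  have inj: "inj_on (\<lambda>k. (f ^^ k) v) {..<t}"
  proof (rule inj_onI, rule ccontr)
    fix i j assume i: "i \<in> {..<t}" and j: "j \<in> {..<t}" and eq: "(f ^^ i) v = (f ^^ j) v" and ne: "i \<noteq> j"
    have gen: "\<And>i j. i < j \<Longrightarrow> j < t \<Longrightarrow> (f ^^ i) v = (f ^^ j) v \<Longrightarrow> False"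
    proof -
      fix i j assume ij: "i < j" "j < t" and e: "(f ^^ i) v = (f ^^ j) v"
      have "(f ^^ (t - j + i)) v = (f ^^ (t - j)) ((f ^^ i) v)" by (rule funpow_apply_add)
      also have "\<dots> = (f ^^ (t - j)) ((f ^^ j) v)" using e by simp
      also have "\<dots> = (f ^^ (t - j + j)) v" by (rule funpow_apply_add[symmetric])
      also have "\<dots> = v" using ij P(2) by simp
      finally have "(f ^^ (t - j + i)) v = v" .
      moreover have "1 \<le> t - j + i" "t - j + i < t" using ij by auto
      ultimately show False using P(3) by blast
    qed
    show False
    proof (cases "i < j")
      case True then show False using gen eq j by auto
    next
      case False then have "j < i" using ne by simp
      then show False using gen[of j i] eq[symmetric] i by auto
    qed
  qed
  have "card (orbf f v) = card {..<t}"
    unfolding orbf_image[OF P(2) P(1)] using card_image[OF inj] by simp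
  thus ?thesis unfolding t_def by simp
qed

lemma orbf_sym:
  assumes "(f ^^ n) v = v" "n \<ge> 1" "w \<in> orbf f v"
  shows "v \<in> orbf f w"
proof -
  obtain k where k: "w = (f ^^ k) v" using assms(3) unfolding orbf_def by blast
  hence w: "w = (f ^^ (k mod n)) v" using funpow_mod[OF assms(1)] by simp
  have kn: "k mod n < n" using assms(2) by simp
  have "(f ^^ (n - k mod n)) w = (f ^^ (n - k mod n + k mod n)) v" unfolding w by (rule funpow_apply_add[symmetric])
  also have "\<dots> = v" using kn assms(1) by simp
  finally show ?thesis unfolding orbf_def by blast
qed

lemma orbf_sub: "w \<in> orbf f v \<Longrightarrow> orbf f w \<subseteq> orbf f v"
proof
  fix z assume "w \<in> orbf f v" "z \<in> orbf f w"
  then obtain k j where "w = (f ^^ k) v" "z = (f ^^ j) w" unfolding orbf_def by blast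
  hence "z = (f ^^ (j + k)) v" by (simp add: funpow_apply_add)
  thus "z \<in> orbf f v" unfolding orbf_def by blast
qed

lemma fix_transfer: "(f ^^ n) v = v \<Longrightarrow> w \<in> orbf f v \<Longrightarrow> (f ^^ n) w = w"
proof -
  assume h: "(f ^^ n) v = v" and "w \<in> orbf f v"
  then obtain k where w: "w = (f ^^ k) v" unfolding orbf_def by blast
  have "(f ^^ n) w = (f ^^ (n + k)) v" unfolding w by (rule funpow_apply_add[symmetric])
  also have "\<dots> = (f ^^ (k + n)) v" by (simp add: add.commute)
  also have "\<dots> = (f ^^ k) v" using h by (simp only: funpow_apply_add)
  finally show ?thesis using w by simp
qed

lemma ppf_orb:
  assumes "(f ^^ n) v = v" "n \<ge> 1" "w \<in> orbf f v"
  shows "ppf f w = ppf f v"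
proof -
  have vw: "v \<in> orbf f w" by (rule orbf_sym[OF assms])
  have "\<And>m. (f ^^ m) w = w \<longleftrightarrow> (f ^^ m) v = v"
    using fix_transfer[where f=f and v=v and w=w] fix_transfer[where f=f and v=w and w=v] assms(3) vw by blast
  thus ?thesis unfolding ppf_def by simp
qed

lemma count_orbits:
  assumes fin: "finite S" and inv: "\<And>v. v \<in> S \<Longrightarrow> f v \<in> S"
    and ex: "\<And>v. v \<in> S \<Longrightarrow> \<exists>n\<ge>1. (f ^^ n) v = v"
  shows "t * card {orbf f v | v. v \<in> S \<and> ppf f v = t} = card {v \<in> S. ppf f v = t}"
proof -
  define Y where "Y = {v \<in> S. ppf f v = t}"
  define C where "C = {orbf f v | v. v \<in> S \<and> ppf f v = t}"
  have invk: "\<And>v k. v \<in> S \<Longrightarrow> (f ^^ k) v \<in> S"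
  proof -
    fix v k assume "v \<in> S" then show "(f ^^ k) v \<in> S" by (induction k) (auto intro: inv)
  qed
  have orbS: "\<And>v. v \<in> S \<Longrightarrow> orbf f v \<subseteq> S" unfolding orbf_def using invk by blast
  have UC: "\<Union>C = Y"
  proof
    show "\<Union>C \<subseteq> Y"
    proof
      fix w assume "w \<in> \<Union>C"
      then obtain v where v: "v \<in> S" "ppf f v = t" "w \<in> orbf f v" unfolding C_def by blast
      obtain n where n: "n \<ge> 1" "(f ^^ n) v = v" using ex[OF v(1)] by blast
      have "ppf f w = t" using ppf_orb[OF n(2) n(1) v(3)] v(2) by simp
      moreover have "w \<in> S" using orbS[OF v(1)] v(3) by blast
      ultimately show "w \<in> Y" unfolding Y_def by simp
    qed
    show "Y \<subseteq> \<Union>C"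
    proof
      fix v assume "v \<in> Y"
      moreover have "v \<in> orbf f v" unfolding orbf_def by (rule CollectI, rule exI[of _ 0]) simp
      ultimately show "v \<in> \<Union>C" unfolding Y_def C_def by blast
    qed
  qed
  have finC: "finite C"
  proof -
    have "C = orbf f ` Y" unfolding C_def Y_def by blast
    thus ?thesis using fin unfolding Y_def by simp
  qed
  have finU: "finite (\<Union>C)" unfolding UC Y_def using fin by simp
  have cardC: "\<forall>c\<in>C. card c = t"
  proof
    fix c assume "c \<in> C"
    then obtain v where v: "v \<in> S" "ppf f v = t" "c = orbf f v" unfolding C_def by blast
    obtain n where n: "n \<ge> 1" "(f ^^ n) v = v" using ex[OF v(1)] by blast
    show "card c = t" using card_orbf[OF n(2) n(1)] v by simp
  qed
  have disj: "\<forall>c1\<in>C. \<forall>c2\<in>C. c1 \<noteq> c2 \<longrightarrow> c1 \<inter> c2 = {}"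
  proof (intro ballI impI)
    fix c1 c2 assume c1: "c1 \<in> C" and c2: "c2 \<in> C" and ne: "c1 \<noteq> c2"
    show "c1 \<inter> c2 = {}"
    proof (rule ccontr)
      assume "c1 \<inter> c2 \<noteq> {}"
      then obtain z where z: "z \<in> c1" "z \<in> c2" by blast
      have eq: "\<And>c. c \<in> C \<Longrightarrow> z \<in> c \<Longrightarrow> c = orbf f z"
      proof -
        fix c assume "c \<in> C" "z \<in> c"
        then obtain v where v: "v \<in> S" "c = orbf f v" "z \<in> orbf f v" unfolding C_def by blast
        obtain n where n: "n \<ge> 1" "(f ^^ n) v = v" using ex[OF v(1)] by blast
        have "v \<in> orbf f z" by (rule orbf_sym[OF n(2) n(1) v(3)])
        hence "orbf f v \<subseteq> orbf f z" by (rule orbf_sub)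
        moreover have "orbf f z \<subseteq> orbf f v" using v(3) by (rule orbf_sub)
        ultimately show "c = orbf f z" using v(2) by blast
      qed
      from eq[OF c1 z(1)] eq[OF c2 z(2)] ne show False by simp
    qed
  qed
  have "t * card C = card (\<Union>C)"
    apply (rule card_partition[OF finC finU]) using cardC disj by auto
  hence "t * card C = card Y" using UC by simp
  thus ?thesis unfolding C_def Y_def .
qed


definition vmod :: "nat \<Rightarrow> int \<times> int \<Rightarrow> int \<times> int" where
  "vmod e u = (fst u mod 2^e, snd u mod 2^e)"

lemma mod_lin: fixes m a b X Y :: int
  shows "(a*(X mod m) + b*(Y mod m)) mod m = (a*X + b*Y) mod m"
proof -
  have dX: "m dvd X mod m - X" by (simp add: mod_eq_dvd_iff[symmetric])
  have dY: "m dvd Y mod m - Y" by (simp add: mod_eq_dvd_iff[symmetric])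
  have "(a*(X mod m) + b*(Y mod m)) - (a*X + b*Y) = a*(X mod m - X) + b*(Y mod m - Y)" by algebra
  hence "m dvd (a*(X mod m) + b*(Y mod m)) - (a*X + b*Y)" using dX dY by simp
  thus ?thesis by (simp add: mod_eq_dvd_iff)
qed

lemma space_vmod: "v \<in> cat_space e \<Longrightarrow> vmod e v = v"
  by (cases v) (simp add: cat_space_def vmod_def)

lemma iter:
  assumes "v \<in> cat_space e"
  shows "(cat_map p q e ^^ n) v = vmod e (mv (cat_matpow p q n) v)"
proof (induction n)
  case 0
  have "mv (1,0,0,1) v = v" by (simp add: mv_def)
  then show ?case using space_vmod[OF assms] by simp
next
  case (Suc n)
  obtain X Y where XY: "mv (cat_matpow p q n) v = (X,Y)" by (cases "mv (cat_matpow p q n) v") auto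
  have "mv (cat_matpow p q (Suc n)) v = mv (cat_mat p q) (X,Y)" by (simp add: mv_mult XY)
  also have "\<dots> = (X + p*Y, q*X + (1+p*q)*Y)" by (simp add: mv_def cat_mat_def)
  finally have e1: "mv (cat_matpow p q (Suc n)) v = (X + p*Y, q*X + (1+p*q)*Y)" .
  have "(cat_map p q e ^^ Suc n) v = cat_map p q e (X mod 2^e, Y mod 2^e)"
    using Suc by (simp add: XY vmod_def)
  also have "\<dots> = ((X mod 2^e + p*(Y mod 2^e)) mod 2^e, (q*(X mod 2^e) + (1+p*q)*(Y mod 2^e)) mod 2^e)"
    by (simp add: cat_map_def)
  also have "\<dots> = ((X + p*Y) mod 2^e, (q*X + (1+p*q)*Y) mod 2^e)"
    using mod_lin[of 1 X "2^e" p Y] mod_lin[of q X "2^e" "1+p*q" Y] by simp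
  finally show ?case unfolding e1 vmod_def by simp
qed

lemma fix_iff:
  assumes "v \<in> cat_space e"
  shows "(cat_map p q e ^^ n) v = v \<longleftrightarrow> fx p q (2^e) n v"
proof -
  obtain X Y where XY: "mv (cat_matpow p q n) v = (X,Y)" by (cases "mv (cat_matpow p q n) v") auto
  obtain x y where v: "v = (x,y)" by (cases v) auto
  have xm: "x mod 2^e = x" "y mod 2^e = y" using assms space_vmod[OF assms] by (simp_all add: v vmod_def)
  have it: "(cat_map p q e ^^ n) v = (X mod 2^e, Y mod 2^e)"
    using iter[OF assms, where p=p and q=q and n=n] XY by (simp add: vmod_def)
  have "(cat_map p q e ^^ n) v = v \<longleftrightarrow> X mod 2^e = x mod 2^e \<and> Y mod 2^e = y mod 2^e"
    unfolding it using xm v by auto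
  also have "\<dots> \<longleftrightarrow> fx p q (2^e) n v" unfolding fx_def vc_def XY using v by (simp add: mod_eq_dvd_iff)
  finally show ?thesis .
qed

lemma pp_eq: "v \<in> cat_space e \<Longrightarrow> ppf (cat_map p q e) v = per p q e v"
  unfolding ppf_def per_def using fix_iff by simp

lemma space_inv: "cat_map p q e v \<in> cat_space e"
  by (cases v) (simp add: cat_map_def cat_space_def)

lemma space_fin: "finite (cat_space e)"
  by (simp add: cat_space_def)

lemma space_ex: "v \<in> cat_space e \<Longrightarrow> \<exists>n\<ge>1. (cat_map p q e ^^ n) v = v"
proof -
  assume v: "v \<in> cat_space e"
  have "fx p q (2^e) (T1 p q * 2^e) v" using P2 mI_fx by blast
  moreover have "T1 p q * 2^e \<ge> 1" using T1_pos[of p q] by simp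
  ultimately show ?thesis using fix_iff[OF v] by blast
qed

lemma count_eq: "Tc * num_cycles p q Tc e = card {v \<in> cat_space e. per p q e v = Tc}"
proof -
  have c: "Tc * card {orbf (cat_map p q e) v | v. v \<in> cat_space e \<and> ppf (cat_map p q e) v = Tc}
     = card {v \<in> cat_space e. ppf (cat_map p q e) v = Tc}"
    by (rule count_orbits[OF space_fin space_inv space_ex])
  have s1: "{orbf (cat_map p q e) v | v. v \<in> cat_space e \<and> ppf (cat_map p q e) v = Tc}
     = {cat_orbit p q e v | v. v \<in> cat_space e \<and> point_period p q e v = Tc}"
    unfolding orbf_def cat_orbit_def ppf_def point_period_def ..
  have s2: "{v \<in> cat_space e. ppf (cat_map p q e) v = Tc} = {v \<in> cat_space e. per p q e v = Tc}"
    using pp_eq[of _ e p q] by auto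
  show ?thesis using c unfolding s1 s2 num_cycles_def .
qed

lemma fx_vc: "vc m u u' \<Longrightarrow> fx p q m n u \<longleftrightarrow> fx p q m n u'"
proof -
  assume h: "vc m u u'"
  have l: "vc m (mv (cat_matpow p q n) u) (mv (cat_matpow p q n) u')" by (rule vc_lin[OF h])
  show ?thesis unfolding fx_def using h l by (meson vc_sym vc_trans)
qed

lemma per_vc: "vc (2^e) u u' \<Longrightarrow> per p q e u = per p q e u'"
  unfolding per_def using fx_vc by simp


lemma div01: fixes a M :: int assumes "M > 0" "0 \<le> a" "a < 2*M" shows "a div M \<in> {0,1}"
proof -
  have nn: "0 \<le> a div M" using assms by (simp add: pos_imp_zdiv_nonneg_iff)
  have "a div M < 2"
  proof (rule ccontr)
    assume "\<not> a div M < 2" hence "2 \<le> a div M" by simp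
    hence "M*2 \<le> M*(a div M)" using assms(1) by (simp add: mult_left_mono)
    moreover have "M*(a div M) + a mod M = a" by (rule mult_div_mod_eq)
    moreover have "a mod M \<ge> 0" using assms(1) by simp
    ultimately show False using assms(3) by linarith
  qed
  thus ?thesis using nn by auto
qed

lemma card_lift:
  assumes p: "p > 0" and q: "q > 0" and gt: "Tc > cat_period p q (nat (e_s p q))"
  shows "card {u \<in> cat_space (e+1). per p q (e+1) u = 2*Tc} = 4 * card {v \<in> cat_space e. per p q e v = Tc}"
proof -
  define M :: int where "M = 2^e"
  have Mpos: "M > 0" unfolding M_def by simp
  have M2: "(2::int)^(e+1) = 2*M" unfolding M_def by simp
  define Y1 where "Y1 = {v \<in> cat_space e. per p q e v = Tc}"
  define Y2 where "Y2 = {u \<in> cat_space (e+1). per p q (e+1) u = 2*Tc}"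
  define D where "D = Y1 \<times> ({0::int,1} \<times> {0::int,1})"
  define g where "g = (\<lambda>((x::int,y::int),(i::int,j::int)). (x + i*M, y + j*M))"
  have perg: "per p q e (g ((x,y),(i,j))) = per p q e (x,y)" for x y i j
  proof -
    have "vc (2^e) (g ((x,y),(i,j))) (x,y)" unfolding g_def vc_def M_def by simp
    thus ?thesis by (rule per_vc)
  qed
  have img: "Y2 = g ` D"
  proof
    show "Y2 \<subseteq> g ` D"
    proof
      fix u assume u: "u \<in> Y2"
      obtain a b where ab: "u = (a,b)" by (cases u) auto
      have ra: "0 \<le> a" "a < 2*M" "0 \<le> b" "b < 2*M" using u M2 unfolding Y2_def ab cat_space_def by auto
      define v where "v = (a mod M, b mod M)"
      define i where "i = a div M"
      define j where "j = b div M"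
      have ui: "u = g (v, (i,j))" unfolding g_def v_def i_def j_def ab
        by (simp add: mult.commute)
      have i01: "i \<in> {0,1}" unfolding i_def using ra Mpos div01 by blast
      have j01: "j \<in> {0,1}" unfolding j_def using ra Mpos div01 by blast
      have vs: "v \<in> cat_space e" unfolding v_def cat_space_def M_def by simp
      have "per p q (e+1) u = 2*Tc" using u unfolding Y2_def by simp
      hence "per p q e u = Tc" using K'[OF p q gt] by blast
      hence "per p q e v = Tc" using perg[of "a mod M" "b mod M" i j] ui unfolding v_def by simp
      hence "v \<in> Y1" using vs unfolding Y1_def by simp
      thus "u \<in> g ` D" using ui i01 j01 unfolding D_def by blast
    qed
    show "g ` D \<subseteq> Y2"
    proof
      fix u assume "u \<in> g ` D"
      then obtain x y i j where xy: "(x,y) \<in> Y1" "i \<in> {0,1}" "j \<in> {0,1}" and ug: "u = g ((x,y),(i,j))"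
        unfolding D_def by auto
      have rx: "0 \<le> x" "x < M" "0 \<le> y" "y < M" using xy(1) unfolding Y1_def cat_space_def M_def by auto
      have us: "u \<in> cat_space (e+1)" using rx xy(2,3) M2 unfolding ug g_def cat_space_def by auto
      have "per p q e u = Tc" using perg xy(1) unfolding ug Y1_def by simp
      hence "per p q (e+1) u = 2*Tc" using K[OF p q] gt by simp
      thus "u \<in> Y2" using us unfolding Y2_def by simp
    qed
  qed
  have inj: "inj_on g D"
  proof (rule inj_onI)
    fix z1 z2 assume z1: "z1 \<in> D" and z2: "z2 \<in> D" and eq: "g z1 = g z2"
    obtain x y i j where a1: "z1 = ((x,y),(i,j))" by (cases z1) auto
    obtain x' y' i' j' where a2: "z2 = ((x',y'),(i',j'))" by (cases z2) auto
    have r: "0 \<le> x" "x < M" "0 \<le> y" "y < M" "0 \<le> x'" "x' < M" "0 \<le> y'" "y' < M"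
      using z1 z2 unfolding a1 a2 D_def Y1_def cat_space_def M_def by auto
    have ij: "i \<in> {0,1}" "j \<in> {0,1}" "i' \<in> {0,1}" "j' \<in> {0,1}" using z1 z2 unfolding a1 a2 D_def by auto
    have e1: "x + i*M = x' + i'*M" and e2: "y + j*M = y' + j'*M" using eq unfolding a1 a2 g_def by auto
    have "x = x' \<and> i = i'" using e1 r ij by auto
    moreover have "y = y' \<and> j = j'" using e2 r ij by auto
    ultimately show "z1 = z2" unfolding a1 a2 by simp
  qed
  have finY1: "finite Y1" unfolding Y1_def using space_fin by simp
  have "card Y2 = card D" unfolding img by (rule card_image[OF inj])
  also have "\<dots> = card Y1 * 4" unfolding D_def using finY1 by (simp add: card_cartesian_product)
  finally show ?thesis unfolding Y1_def Y2_def by simp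
qed

theorem theorem3:
  fixes p q :: int and e Tc :: nat
  assumes "p > 0" and "q > 0" and "e > 0"
    and "Tc > cat_period p q (nat (e_s p q))"
  shows "2 * num_cycles p q Tc e = num_cycles p q (2 * Tc) (e + 1)"
proof -
  have c1: "Tc * num_cycles p q Tc e = card {v \<in> cat_space e. per p q e v = Tc}" by (rule count_eq)
  have c2: "(2*Tc) * num_cycles p q (2*Tc) (e+1) = card {u \<in> cat_space (e+1). per p q (e+1) u = 2*Tc}"
    by (rule count_eq)
  have "(2*Tc) * num_cycles p q (2*Tc) (e+1) = 4 * (Tc * num_cycles p q Tc e)"
    unfolding c2 c1 using card_lift[OF assms(1,2,4)] by simp
  moreover have "Tc > 0" using assms(4) by simp
  ultimately show ?thesis by (auto simp: algebra_simps)
qed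


end
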